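(* Let $\emptyset\neq I\subseteq\mathbb{R}^n$ and let $\mathcal{B}$ be a collection of non-empty subsets of $X$ covering $X$. (i) Let $\mathbb{D}\subseteq I$ be unbounded and suppose $A_I\neq\emptyset$. If a continuous $F:I\times X\to Y$ is $(\mathbb{D},\mathcal{B})$-slowly oscillating, then $F$ is $\mathbb{D}$-quasi-asymptotically $(\mathcal{B},I',1)$-almost periodic, where $I':=\bigcup_{\omega\in A_I}\omega\cdot\mathbb{N}$. (ii) Let $\mathbb{D}_j\subseteq I$ be unbounded for $j=1,\dots,n$. For each $\omega=(\omega_1,\dots,\omega_n)\in B_I$ let $\mathbb{D}_\omega$ be the set of all $\mathbf{t}\in\mathbb{D}_n$ such that $\mathbf{t}+\sum_{i=j+1}^n\omega_ie_i\in\mathbb{D}_j$ for all $j\in\{1,\dots,n-1\}$, and suppose each $\mathbb{D}_\omega$ is unbounded, that $\mathcal{D}:=\bigcap_{\omega\in B_I}\mathbb{D}_\omega$ is unbounded, and that $B_I\cap I\neq\emptyset$. Put $I':=\bigcup_{\omega\in B_I\cap I}\omega\cdot\mathbb{N}$. If $F:I\times X\to Y$ is $(\mathcal{B},(\mathbb{D}_j)_{j=1}^n)$-slowly oscillating, then $F$ is $\mathcal{D}$-quasi-asymptotically $(\mathcal{B},I',1)$-almost periodic.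
   Context: $X,Y$ complex Banach spaces; $e_1,\dots,e_n$ the standard basis of $\mathbb{R}^n$; $\omega\cdot\mathbb{N}=\{k\omega:k\in\mathbb{N}\}$; a tuple $(\omega_1,\dots,\omega_n)$ is identified with $\sum_j\omega_je_j$. $A_I:=\{\omega\in\mathbb{R}^n\setminus\{0\}:\omega+I\subseteq I\}$, $B_I:=\{(\omega_1,\dots,\omega_n)\in(\mathbb{R}\setminus\{0\})^n:\omega_je_j+I\subseteq I\text{ for all }j\}$. A continuous $F:I\times X\to Y$ is $(\mathbb{D},\mathcal{B})$-slowly oscillating if for each $B\in\mathcal{B}$ and $\omega\in A_I$, $\lim_{|\mathbf{t}|\to\infty,\mathbf{t}\in\mathbb{D}}\|F(\mathbf{t}+\omega;x)-F(\mathbf{t};x)\|_Y=0$ uniformly in $x\in B$. It is $(\mathcal{B},(\mathbb{D}_j)_{j=1}^n)$-slowly oscillating if for each $B\in\mathcal{B}$, $(\omega_1,\dots,\omega_n)\in B_I$ and $j$, $\lim_{|\mathbf{t}|\to\infty,\mathbf{t}\in\mathbb{D}_j}\|F(\mathbf{t}+\omega_je_j;x)-F(\mathbf{t};x)\|_Y=0$ uniformly in $x\in B$. For $\mathbb{D}\subseteq I$ unbounded, $I'$ unbounded with $I+I'\subseteq I$, $\mathbb{D}_M:=\{\mathbf{t}\in\mathbb{D}:|\mathbf{t}|\ge M\}$, a continuous $F$ is $\mathbb{D}$-quasi-asymptotically $(\mathcal{B},I',c)$-almost periodic if for every $B\in\mathcal{B}$ and $\epsilon>0$ there is $l>0$ such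 that for each $\mathbf{t}_0\in I'$ there is $\tau\in B(\mathbf{t}_0,l)\cap I'$ and a finite $M(\epsilon,\tau)>0$ with $\|F(\mathbf{t}+\tau;x)-cF(\mathbf{t};x)\|_Y\le\epsilon$ whenever $\mathbf{t},\mathbf{t}+\tau\in\mathbb{D}_{M(\epsilon,\tau)}$, $x\in B$. *)

theory Defs
  imports "HOL-Analysis.Analysis"
begin

text \<open>Points of R^n are vectors of type real ^ 'n; the index type is linearly ordered
  so that the ordering e_1, ..., e_n of the standard basis is available.
  The standard basis vector e_j is axis j 1.\<close>

definition A_set :: "(real ^ 'n) set \<Rightarrow> (real ^ 'n) set" where
  "A_set I = {\<omega>. \<omega> \<noteq> 0 \<and> (\<lambda>t. \<omega> + t) ` I \<subseteq> I}"

definition B_set :: "(real ^ 'n) set \<Rightarrow> (real ^ 'n) set" where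
  "B_set I = {\<omega>. (\<forall>j. \<omega> $ j \<noteq> 0) \<and> (\<forall>j. (\<lambda>t. (\<omega> $ j) *\<^sub>R axis j 1 + t) ` I \<subseteq> I)}"

definition mult_N :: "real ^ 'n \<Rightarrow> (real ^ 'n) set" where
  "mult_N \<omega> = {real k *\<^sub>R \<omega> | k. k \<ge> (1::nat)}"

definition cont_IX :: "(real ^ 'n) set \<Rightarrow> (real ^ 'n \<Rightarrow> 'x::real_normed_vector \<Rightarrow> 'y::real_normed_vector) \<Rightarrow> bool" where
  "cont_IX I F \<longleftrightarrow> continuous_on (I \<times> UNIV) (\<lambda>(t, x). F t x)"

definition slowly_osc_D ::
  "(real ^ 'n) set \<Rightarrow> (real ^ 'n) set \<Rightarrow> 'x set set \<Rightarrow>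
   (real ^ 'n \<Rightarrow> 'x::real_normed_vector \<Rightarrow> 'y::real_normed_vector) \<Rightarrow> bool" where
  "slowly_osc_D I D \<B> F \<longleftrightarrow> cont_IX I F \<and>
     (\<forall>B\<in>\<B>. \<forall>\<omega>\<in>A_set I. \<forall>\<epsilon>>0. \<exists>M. \<forall>t\<in>D. \<forall>x\<in>B.
        norm t \<ge> M \<longrightarrow> norm (F (t + \<omega>) x - F t x) < \<epsilon>)"

definition slowly_osc_Dj ::
  "(real ^ 'n) set \<Rightarrow> ('n \<Rightarrow> (real ^ 'n) set) \<Rightarrow> 'x set set \<Rightarrow>
   (real ^ 'n \<Rightarrow> 'x::real_normed_vector \<Rightarrow> 'y::real_normed_vector) \<Rightarrow> bool" where
  "slowly_osc_Dj I D \<B> F \<longleftrightarrow> cont_IX I F \<and>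
     (\<forall>B\<in>\<B>. \<forall>\<omega>\<in>B_set I. \<forall>j. \<forall>\<epsilon>>0. \<exists>M. \<forall>t\<in>D j. \<forall>x\<in>B.
        norm t \<ge> M \<longrightarrow> norm (F (t + (\<omega> $ j) *\<^sub>R axis j 1) x - F t x) < \<epsilon>)"

text \<open>D-quasi-asymptotically (B, I', c)-almost periodic, including the standing
  requirements of the definition (D subset of I unbounded, I' unbounded, I + I' subset of I).\<close>
definition quasi_asymp_ap ::
  "(real ^ 'n) set \<Rightarrow> (real ^ 'n) set \<Rightarrow> 'x set set \<Rightarrow> (real ^ 'n) set \<Rightarrow> real \<Rightarrow>
   (real ^ 'n \<Rightarrow> 'x::real_normed_vector \<Rightarrow> 'y::real_normed_vector) \<Rightarrow> bool" where
  "quasi_asymp_ap I D \<B> I' c F \<longleftrightarrow>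
     D \<subseteq> I \<and> \<not> bounded D \<and> \<not> bounded I' \<and> (\<forall>t\<in>I. \<forall>s\<in>I'. t + s \<in> I) \<and> cont_IX I F \<and>
     (\<forall>B\<in>\<B>. \<forall>\<epsilon>>0. \<exists>l>0. \<forall>t0\<in>I'. \<exists>\<tau>\<in>ball t0 l \<inter> I'. \<exists>M>0.
        \<forall>t x. t \<in> D \<and> norm t \<ge> M \<and> t + \<tau> \<in> D \<and> norm (t + \<tau>) \<ge> M \<and> x \<in> B \<longrightarrow>
          norm (F (t + \<tau>) x - c *\<^sub>R F t x) \<le> \<epsilon>)"

end

theory Submission
  imports Defs
begin

lemma shift_iter:
  fixes v :: "'a::real_vector"
  assumes "\<forall>t\<in>I. v + t \<in> I" "t \<in> I"
  shows "real k *\<^sub>R v + t \<in> I"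
proof (induction k)
  case 0 then show ?case using assms by simp
next
  case (Suc k)
  have eq: "real (Suc k) *\<^sub>R v + t = v + (real k *\<^sub>R v + t)" by (simp add: algebra_simps)
  have "v + (real k *\<^sub>R v + t) \<in> I" using Suc assms(1) by blast
  then show ?case unfolding eq .
qed

lemma A_mult:
  assumes "\<omega> \<in> A_set I" "k \<ge> (1::nat)"
  shows "real k *\<^sub>R \<omega> \<in> A_set I"
proof -
  have "\<forall>t\<in>I. \<omega> + t \<in> I" using assms unfolding A_set_def by auto
  then have "\<forall>t\<in>I. real k *\<^sub>R \<omega> + t \<in> I" using shift_iter by blast
  moreover have "real k *\<^sub>R \<omega> \<noteq> 0" using assms unfolding A_set_def by auto
  ultimately show ?thesis unfolding A_set_def by auto
qed

lemma B_mult: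
  assumes "\<omega> \<in> B_set I" "k \<ge> (1::nat)"
  shows "real k *\<^sub>R \<omega> \<in> B_set I"
proof -
  have a: "\<forall>j. \<forall>t\<in>I. (\<omega> $ j) *\<^sub>R axis j 1 + t \<in> I" using assms unfolding B_set_def by auto
  have "\<forall>j. \<forall>t\<in>I. ((real k *\<^sub>R \<omega>) $ j) *\<^sub>R axis j 1 + t \<in> I"
  proof (intro allI ballI)
    fix j t assume "t \<in> I"
    have "((real k *\<^sub>R \<omega>) $ j) *\<^sub>R axis j 1 = real k *\<^sub>R ((\<omega> $ j) *\<^sub>R axis j 1)" by simp
    then show "((real k *\<^sub>R \<omega>) $ j) *\<^sub>R axis j 1 + t \<in> I"
      using shift_iter[of I "(\<omega> $ j) *\<^sub>R axis j 1" t k] a \<open>t\<in>I\<close> by simp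
  qed
  moreover have "\<forall>j. (real k *\<^sub>R \<omega>) $ j \<noteq> 0" using assms unfolding B_set_def by auto
  ultimately show ?thesis unfolding B_set_def by auto
qed

lemma vec_sum_axis: "(\<Sum>i\<in>UNIV. (\<omega> $ i) *\<^sub>R axis i (1::real)) = (\<omega> :: real ^ 'n)"
  by (simp add: vec_eq_iff sum_component axis_def if_distrib[of "\<lambda>x. _ * x"] cong: if_cong)

lemma sum_shift:
  assumes "\<forall>j. \<forall>t\<in>I. (\<omega> $ j) *\<^sub>R axis j 1 + t \<in> I" "finite S"
  shows "\<forall>t\<in>I. (\<Sum>i\<in>S. (\<omega> $ i) *\<^sub>R axis i (1::real)) + t \<in> I"
  using assms(2)
proof (induction S rule: finite_induct)
  case empty then show ?case by simp
next
  case (insert x F)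
  show ?case
  proof
    fix t assume "t \<in> I"
    have "(\<Sum>i\<in>insert x F. (\<omega> $ i) *\<^sub>R axis i (1::real)) + t
        = (\<omega> $ x) *\<^sub>R axis x 1 + ((\<Sum>i\<in>F. (\<omega> $ i) *\<^sub>R axis i (1::real)) + t)"
      using insert by (simp add: algebra_simps)
    moreover have "(\<omega> $ x) *\<^sub>R axis x 1 + ((\<Sum>i\<in>F. (\<omega> $ i) *\<^sub>R axis i (1::real)) + t) \<in> I"
      using insert.IH \<open>t\<in>I\<close> assms(1) by blast
    ultimately show "(\<Sum>i\<in>insert x F. (\<omega> $ i) *\<^sub>R axis i (1::real)) + t \<in> I"
      by (simp add: add.assoc)
  qed
qed

lemma B_shift:
  assumes "\<omega> \<in> B_set I" "t \<in> I"
  shows "\<omega> + t \<in> I"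
proof -
  have "\<forall>j. \<forall>t\<in>I. (\<omega> $ j) *\<^sub>R axis j 1 + t \<in> I" using assms unfolding B_set_def by auto
  from sum_shift[OF this, of UNIV] assms(2) show ?thesis by (simp add: vec_sum_axis)
qed

lemma unbounded_multN:
  fixes \<omega> :: "'a::real_normed_vector"
  assumes "\<omega> \<in> S" "\<omega> \<noteq> 0"
  shows "\<not> bounded (\<Union>\<omega>\<in>S. {real k *\<^sub>R \<omega> | k. k \<ge> (1::nat)})"
proof
  assume "bounded (\<Union>\<omega>\<in>S. {real k *\<^sub>R \<omega> | k. k \<ge> (1::nat)})"
  then obtain e where e: "\<And>x. x\<in>(\<Union>\<omega>\<in>S. {real k *\<^sub>R \<omega> | k. k \<ge> (1::nat)}) \<Longrightarrow> norm x \<le> e"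
    unfolding bounded_iff by blast
  have np: "norm \<omega> > 0" using assms by simp
  obtain k :: nat where k: "real k > \<bar>e\<bar> / norm \<omega>" using reals_Archimedean2 by blast
  have mem: "real (Suc k) *\<^sub>R \<omega> \<in> {real k *\<^sub>R \<omega> | k. k \<ge> (1::nat)}"
    by (intro CollectI exI[of _ "Suc k"]) simp
  have "real (Suc k) *\<^sub>R \<omega> \<in> (\<Union>\<omega>\<in>S. {real k *\<^sub>R \<omega> | k. k \<ge> (1::nat)})"
    using assms(1) mem by (rule UN_I)
  then have "norm (real (Suc k) *\<^sub>R \<omega>) \<le> e" by (rule e)
  then have le: "real (Suc k) * norm \<omega> \<le> e" by simp
  have "real (Suc k) > \<bar>e\<bar> / norm \<omega>" using k by simp
  then have "real (Suc k) * norm \<omega> > \<bar>e\<bar>" using np by (simp add: field_simps)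
  with le show False by simp
qed

definition upclosed :: "'a::linorder set \<Rightarrow> bool" where
  "upclosed S \<longleftrightarrow> (\<forall>a\<in>S. \<forall>b. a \<le> b \<longrightarrow> b \<in> S)"

lemma telescope:
  fixes G :: "real ^ ('n::{finite,linorder}) \<Rightarrow> 'y::real_normed_vector"
    and v :: "('n::{finite,linorder}) \<Rightarrow> real ^ ('n::{finite,linorder})"
  assumes h: "\<forall>j. norm (G (t + (\<Sum>i\<in>{j<..}. v i) + v j) - G (t + (\<Sum>i\<in>{j<..}. v i))) < \<delta>"
  shows "card S = n \<Longrightarrow> upclosed S \<Longrightarrow> norm (G (t + (\<Sum>i\<in>S. v i)) - G t) \<le> real (card S) * \<delta>"
proof (induction n arbitrary: S)
  case 0
  then have "S = {}" by simp
  then show ?case by simp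
next
  case (Suc n)
  then have ne: "S \<noteq> {}" by auto
  define m where "m = Min S"
  have fin: "finite S" by simp
  have mS: "m \<in> S" using ne fin m_def by simp
  define S' where "S' = S - {m}"
  have cS': "card S' = n" using Suc.prems mS S'_def by simp
  have S'eq: "S' = {m<..}"
  proof
    show "S' \<subseteq> {m<..}" using S'_def m_def fin by (auto simp: less_le)
    show "{m<..} \<subseteq> S'" using Suc.prems(2) mS S'_def unfolding upclosed_def by auto
  qed
  have up': "upclosed S'" unfolding S'eq upclosed_def by auto
  have IH: "norm (G (t + (\<Sum>i\<in>S'. v i)) - G t) \<le> real n * \<delta>"
    using Suc.IH[OF cS' up'] cS' by simp
  have sumeq: "(\<Sum>i\<in>S. v i) = v m + (\<Sum>i\<in>S'. v i)"
    using sum.remove[OF fin mS] S'_def by simp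
  have "G (t + (\<Sum>i\<in>S. v i)) - G t
     = (G (t + (\<Sum>i\<in>S'. v i) + v m) - G (t + (\<Sum>i\<in>S'. v i))) + (G (t + (\<Sum>i\<in>S'. v i)) - G t)"
    by (simp add: sumeq algebra_simps)
  then have "norm (G (t + (\<Sum>i\<in>S. v i)) - G t)
      \<le> norm (G (t + (\<Sum>i\<in>S'. v i) + v m) - G (t + (\<Sum>i\<in>S'. v i))) + norm (G (t + (\<Sum>i\<in>S'. v i)) - G t)"
    by (metis norm_triangle_ineq)
  also have "\<dots> \<le> \<delta> + real n * \<delta>"
    using h[rule_format, of m] IH unfolding S'eq by simp
  finally show ?case using Suc.prems by (simp add: algebra_simps)
qed


lemma part1:
  fixes I :: "(real ^ 'n::{finite,linorder}) set"
    and \<B> :: "'x::banach set set"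
    and F :: "real ^ ('n::{finite,linorder}) \<Rightarrow> 'x \<Rightarrow> 'y::banach"
  assumes "D \<subseteq> I" "\<not> bounded D" "A_set I \<noteq> {}" and so: "slowly_osc_D I D \<B> F"
  shows "quasi_asymp_ap I D \<B> (\<Union>\<omega>\<in>A_set I. mult_N \<omega>) 1 F"
proof -
  obtain \<omega>0 where w0: "\<omega>0 \<in> A_set I" using assms(3) by blast
  have nz: "\<omega>0 \<noteq> 0" using w0 unfolding A_set_def by auto
  have ub: "\<not> bounded (\<Union>\<omega>\<in>A_set I. mult_N \<omega>)"
    unfolding mult_N_def using unbounded_multN[OF w0 nz] .
  have memA: "\<tau> \<in> A_set I" if "\<tau> \<in> (\<Union>\<omega>\<in>A_set I. mult_N \<omega>)" for \<tau>
    using that A_mult unfolding mult_N_def by blast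
  have sh: "\<forall>t\<in>I. \<forall>s\<in>(\<Union>\<omega>\<in>A_set I. mult_N \<omega>). t + s \<in> I"
  proof (intro ballI)
    fix t s assume "t \<in> I" "s \<in> (\<Union>\<omega>\<in>A_set I. mult_N \<omega>)"
    then have "s + t \<in> I" using memA[of s] unfolding A_set_def by auto
    then show "t + s \<in> I" by (simp add: add.commute)
  qed
  have cont: "cont_IX I F" using so unfolding slowly_osc_D_def by simp
  have main: "\<forall>B\<in>\<B>. \<forall>\<epsilon>>0. \<exists>l>0. \<forall>t0\<in>(\<Union>\<omega>\<in>A_set I. mult_N \<omega>). \<exists>\<tau>\<in>ball t0 l \<inter> (\<Union>\<omega>\<in>A_set I. mult_N \<omega>). \<exists>M>0.
        \<forall>t x. t \<in> D \<and> norm t \<ge> M \<and> t + \<tau> \<in> D \<and> norm (t + \<tau>) \<ge> M \<and> x \<in> B \<longrightarrow>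
          norm (F (t + \<tau>) x - 1 *\<^sub>R F t x) \<le> \<epsilon>"
  proof (intro ballI allI impI)
    fix B \<epsilon> assume B: "B \<in> \<B>" and e: "(\<epsilon>::real) > 0"
    show "\<exists>l>0. \<forall>t0\<in>(\<Union>\<omega>\<in>A_set I. mult_N \<omega>). \<exists>\<tau>\<in>ball t0 l \<inter> (\<Union>\<omega>\<in>A_set I. mult_N \<omega>). \<exists>M>0.
        \<forall>t x. t \<in> D \<and> norm t \<ge> M \<and> t + \<tau> \<in> D \<and> norm (t + \<tau>) \<ge> M \<and> x \<in> B \<longrightarrow>
          norm (F (t + \<tau>) x - 1 *\<^sub>R F t x) \<le> \<epsilon>"
    proof (intro exI[of _ 1] conjI ballI)
      fix t0 assume t0: "t0 \<in> (\<Union>\<omega>\<in>A_set I. mult_N \<omega>)"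
      have "t0 \<in> A_set I" using memA[OF t0] .
      then obtain M where M: "\<forall>t\<in>D. \<forall>x\<in>B. norm t \<ge> M \<longrightarrow> norm (F (t + t0) x - F t x) < \<epsilon>"
        using so B e unfolding slowly_osc_D_def by blast
      show "\<exists>\<tau>\<in>ball t0 1 \<inter> (\<Union>\<omega>\<in>A_set I. mult_N \<omega>). \<exists>M>0.
        \<forall>t x. t \<in> D \<and> norm t \<ge> M \<and> t + \<tau> \<in> D \<and> norm (t + \<tau>) \<ge> M \<and> x \<in> B \<longrightarrow>
          norm (F (t + \<tau>) x - 1 *\<^sub>R F t x) \<le> \<epsilon>"
      proof (intro bexI[of _ t0] exI[of _ "max M 1"] conjI allI impI)
        show "t0 \<in> ball t0 1 \<inter> (\<Union>\<omega>\<in>A_set I. mult_N \<omega>)" using t0 by simp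
        show "0 < max M 1" by simp
        fix t x assume "t \<in> D \<and> max M 1 \<le> norm t \<and> t + t0 \<in> D \<and> max M 1 \<le> norm (t + t0) \<and> x \<in> B"
        then show "norm (F (t + t0) x - 1 *\<^sub>R F t x) \<le> \<epsilon>" using M by fastforce
      qed
    qed simp
  qed
  show ?thesis unfolding quasi_asymp_ap_def using assms(1,2) ub sh cont main by blast
qed

lemma part2:
  fixes I :: "(real ^ 'n::{finite,linorder}) set"
    and \<B> :: "'x::banach set set"
    and F :: "real ^ ('n::{finite,linorder}) \<Rightarrow> 'x \<Rightarrow> 'y::banach"
    and Dj :: "('n::{finite,linorder}) \<Rightarrow> (real ^ 'n::{finite,linorder}) set"
  assumes Dw_def: "Dw = (\<lambda>\<omega>. {t \<in> Dj (Max UNIV).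
                     \<forall>j. j \<noteq> Max UNIV \<longrightarrow>
                       t + (\<Sum>i\<in>{j<..}. (\<omega> $ i) *\<^sub>R axis i 1) \<in> Dj j})"
    and DD: "\<D> = (\<Inter>\<omega>\<in>B_set I. Dw \<omega>)"
    and hD: "\<forall>j. Dj j \<subseteq> I \<and> \<not> bounded (Dj j)"
    and ubD: "\<not> bounded \<D>" and BI: "B_set I \<inter> I \<noteq> {}" and so: "slowly_osc_Dj I Dj \<B> F"
  shows "quasi_asymp_ap I \<D> \<B> (\<Union>\<omega>\<in>B_set I \<inter> I. mult_N \<omega>) 1 F"
proof -
  obtain \<omega>0 where w0: "\<omega>0 \<in> B_set I \<inter> I" using BI by blast
  have nz: "\<omega>0 \<noteq> 0"
  proof
    assume "\<omega>0 = 0"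
    then have "\<omega>0 $ undefined = 0" by simp
    then show False using w0 unfolding B_set_def by auto
  qed
  have ub: "\<not> bounded (\<Union>\<omega>\<in>B_set I \<inter> I. mult_N \<omega>)"
    unfolding mult_N_def using unbounded_multN[OF w0 nz] .
  have memB: "\<tau> \<in> B_set I" if "\<tau> \<in> (\<Union>\<omega>\<in>B_set I \<inter> I. mult_N \<omega>)" for \<tau>
    using that B_mult unfolding mult_N_def by blast
  have sh: "\<forall>t\<in>I. \<forall>s\<in>(\<Union>\<omega>\<in>B_set I \<inter> I. mult_N \<omega>). t + s \<in> I"
  proof (intro ballI)
    fix t s assume "t \<in> I" "s \<in> (\<Union>\<omega>\<in>B_set I \<inter> I. mult_N \<omega>)"
    then have "s + t \<in> I" using memB[of s] B_shift by blast
    then show "t + s \<in> I" by (simp add: add.commute)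
  qed
  have cont: "cont_IX I F" using so unfolding slowly_osc_Dj_def by simp
  have DsubI: "\<D> \<subseteq> I"
  proof
    fix t assume "t \<in> \<D>"
    then have "t \<in> Dw \<omega>0" using DD w0 by blast
    then have "t \<in> Dj (Max UNIV)" using Dw_def by simp
    then show "t \<in> I" using hD by blast
  qed
  have main: "\<forall>B\<in>\<B>. \<forall>\<epsilon>>0. \<exists>l>0. \<forall>t0\<in>(\<Union>\<omega>\<in>B_set I \<inter> I. mult_N \<omega>). \<exists>\<tau>\<in>ball t0 l \<inter> (\<Union>\<omega>\<in>B_set I \<inter> I. mult_N \<omega>). \<exists>M>0.
        \<forall>t x. t \<in> \<D> \<and> norm t \<ge> M \<and> t + \<tau> \<in> \<D> \<and> norm (t + \<tau>) \<ge> M \<and> x \<in> B \<longrightarrow>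
          norm (F (t + \<tau>) x - 1 *\<^sub>R F t x) \<le> \<epsilon>"
  proof (intro ballI allI impI)
    fix B \<epsilon> assume B: "B \<in> \<B>" and e: "(\<epsilon>::real) > 0"
    show "\<exists>l>0. \<forall>t0\<in>(\<Union>\<omega>\<in>B_set I \<inter> I. mult_N \<omega>). \<exists>\<tau>\<in>ball t0 l \<inter> (\<Union>\<omega>\<in>B_set I \<inter> I. mult_N \<omega>). \<exists>M>0.
        \<forall>t x. t \<in> \<D> \<and> norm t \<ge> M \<and> t + \<tau> \<in> \<D> \<and> norm (t + \<tau>) \<ge> M \<and> x \<in> B \<longrightarrow>
          norm (F (t + \<tau>) x - 1 *\<^sub>R F t x) \<le> \<epsilon>"
    proof (intro exI[of _ 1] conjI ballI)
      fix t0 assume t0: "t0 \<in> (\<Union>\<omega>\<in>B_set I \<inter> I. mult_N \<omega>)"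
      have wB: "t0 \<in> B_set I" using memB[OF t0] .
      define \<delta> where "\<delta> = \<epsilon> / real CARD('n)"
      have dpos: "\<delta> > 0" unfolding \<delta>_def using e by simp
      have "\<forall>j. \<exists>M. \<forall>t\<in>Dj j. \<forall>x\<in>B. norm t \<ge> M \<longrightarrow> norm (F (t + (t0 $ j) *\<^sub>R axis j 1) x - F t x) < \<delta>"
        using so B dpos wB unfolding slowly_osc_Dj_def by blast
      then obtain Mf where Mf: "\<And>j t x. t \<in> Dj j \<Longrightarrow> x \<in> B \<Longrightarrow> norm t \<ge> Mf j \<Longrightarrow>
           norm (F (t + (t0 $ j) *\<^sub>R axis j 1) x - F t x) < \<delta>"
        by metis
      define v where "v = (\<lambda>i. (t0 $ i) *\<^sub>R axis i (1::real))"
      define C where "C = (\<Sum>i\<in>UNIV. norm (v i))"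
      define Mt where "Mt = (\<Sum>j\<in>UNIV. \<bar>Mf j\<bar>) + C + 1"
      have Cnn: "C \<ge> 0" unfolding C_def by (simp add: sum_nonneg)
      have Mfle: "Mf j \<le> (\<Sum>j\<in>UNIV. \<bar>Mf j\<bar>)" for j
      proof -
        have "\<bar>Mf j\<bar> \<le> (\<Sum>j\<in>UNIV. \<bar>Mf j\<bar>)" by (rule member_le_sum) auto
        then show ?thesis by simp
      qed
      have Mtpos: "Mt > 0" unfolding Mt_def using Cnn by (simp add: sum_nonneg add_nonneg_pos)
      show "\<exists>\<tau>\<in>ball t0 1 \<inter> (\<Union>\<omega>\<in>B_set I \<inter> I. mult_N \<omega>). \<exists>M>0.
        \<forall>t x. t \<in> \<D> \<and> norm t \<ge> M \<and> t + \<tau> \<in> \<D> \<and> norm (t + \<tau>) \<ge> M \<and> x \<in> B \<longrightarrow>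
          norm (F (t + \<tau>) x - 1 *\<^sub>R F t x) \<le> \<epsilon>"
      proof (intro bexI[of _ t0] exI[of _ Mt] conjI allI impI)
        show "t0 \<in> ball t0 1 \<inter> (\<Union>\<omega>\<in>B_set I \<inter> I. mult_N \<omega>)" using t0 by simp
        show "0 < Mt" by (rule Mtpos)
        fix t x assume H: "t \<in> \<D> \<and> Mt \<le> norm t \<and> t + t0 \<in> \<D> \<and> Mt \<le> norm (t + t0) \<and> x \<in> B"
        then have tD: "t \<in> Dw t0" using DD wB by blast
        have x: "x \<in> B" using H by simp
        have h: "\<forall>j. norm (F (t + (\<Sum>i\<in>{j<..}. v i) + v j) x - F (t + (\<Sum>i\<in>{j<..}. v i)) x) < \<delta>"
        proof
          fix j
          define s where "s = t + (\<Sum>i\<in>{j<..}. v i)"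
          have sD: "s \<in> Dj j"
          proof (cases "j = Max UNIV")
            case True
            have "{j<..} = {}" using True by (auto simp: not_less)
            then have "s = t" unfolding s_def by simp
            then show ?thesis using tD True Dw_def by simp
          next
            case False
            then show ?thesis using tD Dw_def unfolding s_def v_def by simp
          qed
          have "norm (\<Sum>i\<in>{j<..}. v i) \<le> (\<Sum>i\<in>{j<..}. norm (v i))" by (rule norm_sum)
          also have "\<dots> \<le> C" unfolding C_def by (rule sum_mono2) auto
          finally have nC: "norm (\<Sum>i\<in>{j<..}. v i) \<le> C" .
          have "norm t \<le> norm s + norm (\<Sum>i\<in>{j<..}. v i)"
            unfolding s_def by (metis add_diff_cancel_left' norm_triangle_ineq4 diff_add_cancel add.commute norm_triangle_sub)
          then have "norm s \<ge> Mf j" using H nC Mfle[of j] unfolding Mt_def by linarith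
          then show "norm (F (t + (\<Sum>i\<in>{j<..}. v i) + v j) x - F (t + (\<Sum>i\<in>{j<..}. v i)) x) < \<delta>"
            using Mf[OF sD x] unfolding s_def v_def by simp
        qed
        have up: "upclosed (UNIV :: 'n set)" unfolding upclosed_def by simp
        have "norm (F (t + (\<Sum>i\<in>UNIV. v i)) x - F t x) \<le> real (card (UNIV :: 'n set)) * \<delta>"
          using telescope[of "\<lambda>s. F s x" t v \<delta> UNIV "card (UNIV :: 'n set)"] h up by simp
        also have "\<dots> = \<epsilon>" unfolding \<delta>_def by simp
        finally show "norm (F (t + t0) x - 1 *\<^sub>R F t x) \<le> \<epsilon>"
          using vec_sum_axis[of t0] unfolding v_def by simp
      qed
    qed simp
  qed
  show ?thesis unfolding quasi_asymp_ap_def using DsubI ubD ub sh cont main by blast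
qed

theorem proposition3p7:
  fixes I :: "(real ^ 'n::{finite,linorder}) set"
    and \<B> :: "'x::banach set set"
    and F :: "real ^ ('n::{finite,linorder}) \<Rightarrow> 'x \<Rightarrow> 'y::banach"
  assumes I_ne: "I \<noteq> {}"
    and B_ne: "\<forall>B\<in>\<B>. B \<noteq> {}"
    and B_cover: "\<Union>\<B> = UNIV"
  shows
   "(\<forall>D. D \<subseteq> I \<and> \<not> bounded D \<and> A_set I \<noteq> {} \<and> slowly_osc_D I D \<B> F \<longrightarrow>
        quasi_asymp_ap I D \<B> (\<Union>\<omega>\<in>A_set I. mult_N \<omega>) 1 F)
    \<and>
    (\<forall>Dj :: ('n::{finite,linorder}) \<Rightarrow> (real ^ 'n::{finite,linorder}) set.
       let Dw = (\<lambda>\<omega>. {t \<in> Dj (Max UNIV).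
                     \<forall>j. j \<noteq> Max UNIV \<longrightarrow>
                       t + (\<Sum>i\<in>{j<..}. (\<omega> $ i) *\<^sub>R axis i 1) \<in> Dj j});
           \<D> = (\<Inter>\<omega>\<in>B_set I. Dw \<omega>)
       in (\<forall>j. Dj j \<subseteq> I \<and> \<not> bounded (Dj j)) \<and>
          (\<forall>\<omega>\<in>B_set I. \<not> bounded (Dw \<omega>)) \<and> \<not> bounded \<D> \<and>
          B_set I \<inter> I \<noteq> {} \<and> slowly_osc_Dj I Dj \<B> F \<longrightarrow>
          quasi_asymp_ap I \<D> \<B> (\<Union>\<omega>\<in>B_set I \<inter> I. mult_N \<omega>) 1 F)"
proof (intro conjI allI impI)
  fix D
  assume "D \<subseteq> I \<and> \<not> bounded D \<and> A_set I \<noteq> {} \<and> slowly_osc_D I D \<B> F"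
  then show "quasi_asymp_ap I D \<B> (\<Union>\<omega>\<in>A_set I. mult_N \<omega>) 1 F" using part1 by blast
next
  fix Dj
  show "let Dw = (\<lambda>\<omega>. {t \<in> Dj (Max UNIV).
                     \<forall>j. j \<noteq> Max UNIV \<longrightarrow>
                       t + (\<Sum>i\<in>{j<..}. (\<omega> $ i) *\<^sub>R axis i 1) \<in> Dj j});
           \<D> = (\<Inter>\<omega>\<in>B_set I. Dw \<omega>)
       in (\<forall>j. Dj j \<subseteq> I \<and> \<not> bounded (Dj j)) \<and>
          (\<forall>\<omega>\<in>B_set I. \<not> bounded (Dw \<omega>)) \<and> \<not> bounded \<D> \<and>
          B_set I \<inter> I \<noteq> {} \<and> slowly_osc_Dj I Dj \<B> F \<longrightarrow>
          quasi_asymp_ap I \<D> \<B> (\<Union>\<omega>\<in>B_set I \<inter> I. mult_N \<omega>) 1 F"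
    unfolding Let_def
    using part2[OF refl refl, of Dj I \<B> F] by blast
qed

end
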